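(* (1) For any $a,b\in\mathbb C$ with $|a|^2+|b|^2=1$, $a,b\neq0$, and any unit vectors $\ket{s_A},\ket{s_B}\in\mathbb C^2$, writing $p[\Pi(h)]=(\bra{s_A}\otimes\bra{s_B})\Pi(h)(\ket{s_A}\otimes\ket{s_B})$, $p[\Pi(\mathfrak H_{1W})]+p[\Pi(\mathfrak H_{4W})]+p[\Pi(\mathfrak H_{1X})]+p[\Pi(\mathfrak H_{4X})]+p[\Pi(\mathfrak H_{1Y})]+p[\Pi(\mathfrak H_{4Y})]+p[\Pi(\mathfrak H_{2Z})]+p[\Pi(\mathfrak H_{3Z})]\le 3.$ (2) For $a=b=1/\sqrt2$ there exists a unit vector $\ket s\in\mathbb C^2\otimes\mathbb C^2$ (necessarily of Schmidt rank two) such that $\bra s\big(\Pi(\mathfrak H_{1W})+\Pi(\mathfrak H_{4W})+\Pi(\mathfrak H_{1X})+\Pi(\mathfrak H_{4X})+\Pi(\mathfrak H_{1Y})+\Pi(\mathfrak H_{4Y})+\Pi(\mathfrak H_{2Z})+\Pi(\mathfrak H_{3Z})\big)\ket s>3$.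
   Context: In $\mathbb C^2$ let $\ket0=(0,1)^T$, $\ket1=(1,0)^T$, and let $U=\begin{pmatrix}a&b\\-\bar b&\bar a\end{pmatrix}$ with $|a|^2+|b|^2=1$, $a,b\neq0$; the same $U$ acts on both factors of $\mathbb C^2\otimes\mathbb C^2$. Define one-dimensional subspaces (span of the indicated vector): $\mathfrak H_{1W}=\langle\ket1\otimes\ket1\rangle$, $\mathfrak H_{4W}=\langle\ket0\otimes\ket0\rangle$; $\mathfrak H_{1X}=\langle\ket1\otimes U\ket1\rangle$, $\mathfrak H_{4X}=\langle\ket0\otimes U\ket0\rangle$; $\mathfrak H_{1Y}=\langle U\ket1\otimes\ket1\rangle$, $\mathfrak H_{4Y}=\langle U\ket0\otimes\ket0\rangle$; $\mathfrak H_{2Z}=\langle U\ket1\otimes U\ket0\rangle$, $\mathfrak H_{3Z}=\langle U\ket0\otimes U\ket1\rangle$. $\Pi(h)$ is the orthogonal projector onto $h$. The Schmidt rank of a vector in $\mathbb C^2\otimes\mathbb C^2$ is the least $n$ such that it is a sum of $n$ product vectors. *)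

theory Defs
  imports "HOL-Analysis.Analysis"
begin

type_synonym qubit = "complex ^ 2"
type_synonym qubit2 = "complex ^ (2 \<times> 2)"

definition mk2 :: "complex \<Rightarrow> complex \<Rightarrow> qubit" where
  "mk2 x y = (\<chi> i. if i = 1 then x else y)"

definition ket0 :: qubit where "ket0 = mk2 0 1"
definition ket1 :: qubit where "ket1 = mk2 1 0"

text \<open>U = [[a, b], [-cnj b, cnj a]] acting on a column vector\<close>
definition Uop :: "complex \<Rightarrow> complex \<Rightarrow> qubit \<Rightarrow> qubit" where
  "Uop a b v = mk2 (a * v$1 + b * v$2) (- cnj b * v$1 + cnj a * v$2)"

definition tensor :: "qubit \<Rightarrow> qubit \<Rightarrow> qubit2" where
  "tensor x y = (\<chi> p. x$(fst p) * y$(snd p))"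

definition cinner :: "complex ^ 'n \<Rightarrow> complex ^ 'n \<Rightarrow> complex" where
  "cinner u v = (\<Sum>i\<in>UNIV. cnj (u$i) * v$i)"

definition proj_span :: "complex ^ 'n \<Rightarrow> complex ^ 'n \<Rightarrow> complex ^ 'n" where
  "proj_span h w = (cinner h w / cinner h h) *s h"

definition H1W :: "complex \<Rightarrow> complex \<Rightarrow> qubit2" where "H1W a b = tensor ket1 ket1"
definition H4W :: "complex \<Rightarrow> complex \<Rightarrow> qubit2" where "H4W a b = tensor ket0 ket0"
definition H1X :: "complex \<Rightarrow> complex \<Rightarrow> qubit2" where "H1X a b = tensor ket1 (Uop a b ket1)"
definition H4X :: "complex \<Rightarrow> complex \<Rightarrow> qubit2" where "H4X a b = tensor ket0 (Uop a b ket0)"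
definition H1Y :: "complex \<Rightarrow> complex \<Rightarrow> qubit2" where "H1Y a b = tensor (Uop a b ket1) ket1"
definition H4Y :: "complex \<Rightarrow> complex \<Rightarrow> qubit2" where "H4Y a b = tensor (Uop a b ket0) ket0"
definition H2Z :: "complex \<Rightarrow> complex \<Rightarrow> qubit2" where "H2Z a b = tensor (Uop a b ket1) (Uop a b ket0)"
definition H3Z :: "complex \<Rightarrow> complex \<Rightarrow> qubit2" where "H3Z a b = tensor (Uop a b ket0) (Uop a b ket1)"

definition Hvecs :: "complex \<Rightarrow> complex \<Rightarrow> qubit2 list" where
  "Hvecs a b = [H1W a b, H4W a b, H1X a b, H4X a b, H1Y a b, H4Y a b, H2Z a b, H3Z a b]"

definition expect :: "(complex ^ 'n \<Rightarrow> complex ^ 'n) \<Rightarrow> complex ^ 'n \<Rightarrow> complex" where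
  "expect P s = cinner s (P s)"

definition Psum :: "complex \<Rightarrow> complex \<Rightarrow> qubit2 \<Rightarrow> qubit2" where
  "Psum a b w = (\<Sum>h\<leftarrow>Hvecs a b. proj_span h w)"

definition schmidt_rank :: "qubit2 \<Rightarrow> nat" where
  "schmidt_rank s = (LEAST n. \<exists>xs ys :: nat \<Rightarrow> qubit. s = (\<Sum>i<n. tensor (xs i) (ys i)))"

end

theory Submission
  imports Defs
begin

lemma mk2_nth[simp]: "mk2 x y $ 1 = x" "mk2 x y $ 2 = y"
  by (simp_all add: mk2_def)

lemma cinner2: "cinner (u::qubit) v = cnj (u$1) * v$1 + cnj (u$2) * v$2"
  by (simp add: cinner_def sum_2)

lemma sum22: "(\<Sum>p\<in>(UNIV::(2\<times>2) set). f p) = f (1,1) + f (1,2) + f (2,1) + f (2,2)"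
proof -
  have "(\<Sum>p\<in>(UNIV::(2\<times>2) set). f p) = (\<Sum>p\<in>(UNIV::2 set) \<times> (UNIV::2 set). f p)" by simp
  also have "\<dots> = (\<Sum>i\<in>UNIV. \<Sum>j\<in>UNIV. f (i,j))" by (simp add: sum.cartesian_product)
  finally show ?thesis by (simp add: sum_2 add.assoc)
qed

lemma cinner22: "cinner (u::qubit2) v = cnj (u$(1,1)) * v$(1,1) + cnj (u$(1,2)) * v$(1,2)
   + cnj (u$(2,1)) * v$(2,1) + cnj (u$(2,2)) * v$(2,2)"
  by (simp add: cinner_def sum22)

lemma tensor_nth[simp]: "tensor x y $ (i,j) = x$i * y$j"
  by (simp add: tensor_def)

lemma cinner_tensor: "cinner (tensor x y) (tensor u v) = cinner x u * cinner y v"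
  by (simp add: cinner22 cinner2 algebra_simps)

lemma cinner_swap: "cinner s h = cnj (cinner h (s::complex^'n))"
  by (simp add: cinner_def mult.commute)

lemma cinner_scale: "cinner s (c *s h) = c * cinner s (h::complex^'n)"
  by (simp add: cinner_def sum_distrib_left algebra_simps)

lemma expect_proj: assumes "cinner h h = 1"
  shows "Re (expect (proj_span h) s) = (cmod (cinner h s))^2"
proof -
  have "expect (proj_span h) s = cinner h s * cnj (cinner h s)"
    unfolding expect_def proj_span_def assms
    by (simp add: cinner_scale cinner_swap[of s h])
  then show ?thesis by (simp add: complex_mult_cnj cmod_def)
qed

lemma norm_qubit: "norm (x::qubit) = 1 \<Longrightarrow> cmod (x$1)^2 + cmod (x$2)^2 = 1"
  by (simp add: norm_vec_def L2_set_def sum_2)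

lemma cinner_ket0: "cinner ket0 x = x$2" and cinner_ket1: "cinner ket1 x = x$1"
  by (simp_all add: cinner2 ket0_def ket1_def)

lemma U0: "Uop a b ket0 = mk2 b (cnj a)" and U1: "Uop a b ket1 = mk2 a (- cnj b)"
  by (simp_all add: Uop_def ket0_def ket1_def)

lemma cnorm_one: assumes "cmod a ^ 2 + cmod b ^ 2 = 1"
  shows "cinner (Uop a b ket0) (Uop a b ket0) = 1" "cinner (Uop a b ket1) (Uop a b ket1) = 1"
    "cinner ket0 ket0 = 1" "cinner ket1 ket1 = 1"
proof -
  have e: "cnj a * a + cnj b * b = 1"
  proof -
    have "complex_of_real (cmod a ^ 2) + complex_of_real (cmod b ^ 2) = 1"
      using arg_cong[OF assms, of complex_of_real] by (simp only: of_real_add of_real_1)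
    then show ?thesis unfolding complex_norm_square by (simp add: mult.commute)
  qed
  show "cinner (Uop a b ket0) (Uop a b ket0) = 1" "cinner (Uop a b ket1) (Uop a b ket1) = 1"
    using e by (simp_all add: U0 U1 cinner2 algebra_simps)
  show "cinner ket0 ket0 = 1" "cinner ket1 ket1 = 1" by (simp_all add: cinner2 ket0_def ket1_def)
qed

lemma unit_sum: assumes "cmod a ^ 2 + cmod b ^ 2 = 1" "norm (x::qubit) = 1"
  shows "cmod (cinner (Uop a b ket0) x)^2 + cmod (cinner (Uop a b ket1) x)^2 = 1"
proof -
  have "cmod (cinner (Uop a b ket0) x)^2 + cmod (cinner (Uop a b ket1) x)^2
     = (cmod a ^ 2 + cmod b ^ 2) * (cmod (x$1)^2 + cmod (x$2)^2)"
    apply (simp add: U0 U1 cinner2 cmod_power2)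
    by (simp add: power2_eq_square algebra_simps)
  then show ?thesis using assms norm_qubit by simp
qed

lemma chsh:
  fixes p0 p1 u0 u1 q0 q1 v0 v1 :: real
  assumes "0 \<le> p0" "0 \<le> p1" "0 \<le> u0" "0 \<le> u1" "0 \<le> q0" "0 \<le> q1" "0 \<le> v0" "0 \<le> v1"
    "p0 + p1 = 1" "u0 + u1 = 1" "q0 + q1 = 1" "v0 + v1 = 1"
  shows "p1 * q1 + p0 * q0 + p1 * v1 + p0 * v0 + u1 * q1 + u0 * q0 + u1 * v0 + u0 * v1 \<le> 3"
proof -
  define al where "al = p0 - p1"
  define be where "be = u0 - u1"
  define ga where "ga = q0 - q1"
  define de where "de = v0 - v1"
  have b: "\<bar>al\<bar> \<le> 1" "\<bar>be\<bar> \<le> 1" "\<bar>ga\<bar> \<le> 1" "\<bar>de\<bar> \<le> 1"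
    using assms by (auto simp: al_def be_def ga_def de_def)
  have e: "p1 * q1 + p0 * q0 + p1 * v1 + p0 * v0 + u1 * q1 + u0 * q0 + u1 * v0 + u0 * v1
     = 2 + (al * (ga+de) + be * (ga-de))/2"
  proof -
    have h: "p1 = 1 - p0" "u1 = 1 - u0" "q1 = 1 - q0" "v1 = 1 - v0" using assms by auto
    show ?thesis unfolding al_def be_def ga_def de_def h by (simp add: field_simps)
  qed
  have 1: "al * (ga+de) \<le> \<bar>ga+de\<bar>"
  proof -
    have "al * (ga+de) \<le> \<bar>al\<bar> * \<bar>ga+de\<bar>" by (metis abs_ge_self abs_mult)
    also have "\<dots> \<le> \<bar>ga+de\<bar>" using b(1) by (simp add: mult_left_le_one_le)
    finally show ?thesis .
  qed
  have 2: "be * (ga-de) \<le> \<bar>ga-de\<bar>"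
  proof -
    have "be * (ga-de) \<le> \<bar>be\<bar> * \<bar>ga-de\<bar>" by (metis abs_ge_self abs_mult)
    also have "\<dots> \<le> \<bar>ga-de\<bar>" using b(2) by (simp add: mult_left_le_one_le)
    finally show ?thesis .
  qed
  have "\<bar>ga+de\<bar> + \<bar>ga-de\<bar> \<le> 2" using b(3,4) by arith
  then have "al * (ga + de) + be * (ga - de) \<le> 2" using 1 2 by linarith
  then show ?thesis unfolding e by (simp add: field_simps)
qed

lemma expect_tensor: assumes "cinner x x = 1" "cinner y y = 1"
  shows "Re (expect (proj_span (tensor x y)) (tensor u v)) = cmod (cinner x u)^2 * cmod (cinner y v)^2"
  using assms by (simp add: expect_proj cinner_tensor norm_mult power_mult_distrib)

lemma part1:
  assumes ab: "cmod a ^ 2 + cmod b ^ 2 = 1" and A: "norm (sA::qubit) = 1" and B: "norm (sB::qubit) = 1"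
  shows "Re (\<Sum>h\<leftarrow>Hvecs a b. expect (proj_span h) (tensor sA sB)) \<le> 3"
proof -
  note n = cnorm_one[OF ab]
  define p0 where "p0 = cmod (cinner ket0 sA)^2"
  define p1 where "p1 = cmod (cinner ket1 sA)^2"
  define u0 where "u0 = cmod (cinner (Uop a b ket0) sA)^2"
  define u1 where "u1 = cmod (cinner (Uop a b ket1) sA)^2"
  define q0 where "q0 = cmod (cinner ket0 sB)^2"
  define q1 where "q1 = cmod (cinner ket1 sB)^2"
  define v0 where "v0 = cmod (cinner (Uop a b ket0) sB)^2"
  define v1 where "v1 = cmod (cinner (Uop a b ket1) sB)^2"
  have "Re (\<Sum>h\<leftarrow>Hvecs a b. expect (proj_span h) (tensor sA sB))
     = p1 * q1 + p0 * q0 + p1 * v1 + p0 * v0 + u1 * q1 + u0 * q0 + u1 * v0 + u0 * v1"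
    unfolding Hvecs_def H1W_def H4W_def H1X_def H4X_def H1Y_def H4Y_def H2Z_def H3Z_def
    by (simp add: expect_tensor n p0_def p1_def u0_def u1_def q0_def q1_def v0_def v1_def)
  also have "\<dots> \<le> 3"
  proof (rule chsh)
    show "p0 + p1 = 1" "q0 + q1 = 1" unfolding p0_def p1_def q0_def q1_def cinner_ket0 cinner_ket1
      using norm_qubit[OF A] norm_qubit[OF B] by simp_all
    show "u0 + u1 = 1" "v0 + v1 = 1" unfolding u0_def u1_def v0_def v1_def
      using unit_sum[OF ab A] unit_sum[OF ab B] by simp_all
  qed (simp_all add: p0_def p1_def u0_def u1_def q0_def q1_def v0_def v1_def)
  finally show ?thesis .
qed

lemma cinner_add: "cinner s (u + v) = cinner s u + cinner (s::complex^'n) v"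
  by (simp add: cinner_def sum.distrib algebra_simps)

lemma cinner_zero: "cinner s (0::complex^'n) = 0"
  by (simp add: cinner_def)

lemma cinner_sum_list: "cinner s (sum_list (map f xs)) = sum_list (map (\<lambda>h. cinner s (f h)) xs)"
  by (induction xs) (simp_all add: cinner_add cinner_zero)

lemma expect_Psum: "expect (Psum a b) s = (\<Sum>h\<leftarrow>Hvecs a b. expect (proj_span h) s)"
  unfolding expect_def Psum_def by (simp add: cinner_sum_list)

definition sWd :: "real \<Rightarrow> qubit2" where
  "sWd d = tensor ket1 (mk2 (of_real (2 * d)) (- of_real d))
      + tensor ket0 (mk2 (- of_real d) (- of_real (2 * d)))"

lemma sWd_nth: "sWd d $ (1,1) = of_real (2 * d)" "sWd d $ (1,2) = - of_real d"
   "sWd d $ (2,1) = - of_real d" "sWd d $ (2,2) = - of_real (2 * d)"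
  by (simp_all add: sWd_def ket0_def ket1_def)

lemma part2_gen:
  fixes r d :: real assumes r: "r^2 = 1/2" and d: "d^2 = 1/10"
  shows "Re (expect (Psum (of_real r) (of_real r)) (sWd d)) = 17/5"
proof -
  have ab: "cmod (of_real r) ^ 2 + cmod (of_real r) ^ 2 = 1"
    using r by simp
  note n = cnorm_one[OF ab]
  show ?thesis
    unfolding expect_Psum Hvecs_def H1W_def H4W_def H1X_def H4X_def H1Y_def H4Y_def H2Z_def H3Z_def
    apply (simp add: expect_proj cinner_tensor n)
    apply (simp only: U0 U1)
    apply (simp add: cinner22 sWd_nth ket0_def ket1_def cmod_power2)
    apply (simp add: power_mult_distrib r d)
    done
qed

lemma norm_sWd: assumes "d^2 = 1/10" shows "norm (sWd d) = 1"
proof -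
  have "norm (sWd d) = sqrt (10 * d^2)"
    unfolding norm_vec_def L2_set_def sum22 by (simp add: sWd_nth power_mult_distrib)
  then show ?thesis using assms by simp
qed

lemma rank_sWd: assumes "d \<noteq> 0" shows "schmidt_rank (sWd d) = 2"
  unfolding schmidt_rank_def
proof (rule Least_equality)
  show "\<exists>xs ys :: nat \<Rightarrow> qubit. sWd d = (\<Sum>i<2. tensor (xs i) (ys i))"
    by (rule exI[of _ "\<lambda>i. if i = 0 then ket1 else ket0"],
        rule exI[of _ "\<lambda>i. if i = 0 then mk2 (of_real (2 * d)) (- of_real d) else mk2 (- of_real d) (- of_real (2 * d))"])
       (simp add: sWd_def numeral_2_eq_2)
next
  fix m assume "\<exists>xs ys :: nat \<Rightarrow> qubit. sWd d = (\<Sum>i<m. tensor (xs i) (ys i))"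
  then obtain xs ys :: "nat \<Rightarrow> qubit" where e: "sWd d = (\<Sum>i<m. tensor (xs i) (ys i))" by blast
  show "2 \<le> m"
  proof (rule ccontr)
    assume "\<not> 2 \<le> m"
    then have "m = 0 \<or> m = 1" by auto
    then show False
    proof
      assume "m = 0"
      then have "sWd d $ (1,1) = 0" using e by simp
      then show False using assms by (simp add: sWd_nth)
    next
      assume "m = 1"
      then have t: "sWd d = tensor (xs 0) (ys 0)" using e by simp
      have "sWd d $ (1,1) * sWd d $ (2,2) - sWd d $ (1,2) * sWd d $ (2,1) = 0"
        unfolding t by (simp add: algebra_simps)
      then have "- complex_of_real (5 * d^2) = 0" by (simp add: sWd_nth power2_eq_square algebra_simps)
      then show False using assms by simp
    qed
  qed
qed

lemma part2: "\<exists>s::qubit2. norm s = 1 \<and> schmidt_rank s = 2 \<and>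
            Re (expect (Psum (1 / sqrt 2) (1 / sqrt 2)) s) > 3"
proof (intro exI conjI)
  define d :: real where "d = 1 / sqrt 10"
  have d2: "d^2 = 1/10" by (simp add: d_def power_divide)
  show "norm (sWd d) = 1" by (rule norm_sWd[OF d2])
  show "schmidt_rank (sWd d) = 2" by (rule rank_sWd) (simp add: d_def)
  have r2: "(1 / sqrt 2)^2 = (1/2::real)" by (simp add: power_divide)
  have "(1 / complex_of_real (sqrt 2)) = complex_of_real (1 / sqrt 2)" by simp
  then show "Re (expect (Psum (1 / sqrt 2) (1 / sqrt 2)) (sWd d)) > 3"
    using part2_gen[OF r2 d2] by simp
qed

theorem mainTheorem8:
  shows "(\<forall>(a::complex) (b::complex) (sA::qubit) (sB::qubit).
            cmod a ^ 2 + cmod b ^ 2 = 1 \<longrightarrow> a \<noteq> 0 \<longrightarrow> b \<noteq> 0 \<longrightarrow>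
            norm sA = 1 \<longrightarrow> norm sB = 1 \<longrightarrow>
            Re (\<Sum>h\<leftarrow>Hvecs a b. expect (proj_span h) (tensor sA sB)) \<le> 3)
       \<and> (\<exists>s::qubit2. norm s = 1 \<and> schmidt_rank s = 2 \<and>
            Re (expect (Psum (1 / sqrt 2) (1 / sqrt 2)) s) > 3)"
  using part1 part2 by blast

end
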